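(* In the modal logic $\mathrm{SN}$ (defined in the context): if $\vdash A\to B$ then $\vdash NB\to NA$; and if $\vdash A\leftrightarrow B$ then $\vdash NA\leftrightarrow NB$.
   Context: $\mathrm{SN}$ is the logic whose formulas are built from propositional atoms $p$, constants $\top,\bot$ and a propositional constant $t$, using $\neg,\wedge,\vee,\to$ and a unary connective $N$ (which may be applied to any formula and iterated). Its theorems ($\vdash A$) are generated by: all classical tautologies (in this language); the axioms (K) $N(A\wedge B)\leftrightarrow NA\vee NB$; (F) $\neg NA\leftrightarrow N\neg A$; (C) $A\to NNA$; (A) $t\to(p\to N\neg p)$ for atoms $p$; (T) $t\leftrightarrow Nt$; and the rules modus ponens (from $A$ and $A\to B$ infer $B$) and (N) from $A$ infer $N\neg A$. *)

theory Defs
  imports Main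
begin

datatype 'a fm =
    Atom 'a
  | Top
  | Bot
  | T
  | Neg "'a fm"
  | Conj "'a fm" "'a fm"
  | Disj "'a fm" "'a fm"
  | Imp "'a fm" "'a fm"
  | Nc "'a fm"

definition Iff :: "'a fm \<Rightarrow> 'a fm \<Rightarrow> 'a fm" where
  "Iff A B = Conj (Imp A B) (Imp B A)"

text \<open>Classical (propositional) evaluation: atoms, the constant t and all
  formulas of the form N A are treated as propositional variables.\<close>
fun evalc :: "('a \<Rightarrow> bool) \<Rightarrow> bool \<Rightarrow> ('a fm \<Rightarrow> bool) \<Rightarrow> 'a fm \<Rightarrow> bool" where
  "evalc v vt vN (Atom p) = v p"
| "evalc v vt vN Top = True"
| "evalc v vt vN Bot = False"
| "evalc v vt vN T = vt"
| "evalc v vt vN (Neg A) = (\<not> evalc v vt vN A)"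
| "evalc v vt vN (Conj A B) = (evalc v vt vN A \<and> evalc v vt vN B)"
| "evalc v vt vN (Disj A B) = (evalc v vt vN A \<or> evalc v vt vN B)"
| "evalc v vt vN (Imp A B) = (evalc v vt vN A \<longrightarrow> evalc v vt vN B)"
| "evalc v vt vN (Nc A) = vN A"

definition tautology :: "'a fm \<Rightarrow> bool" where
  "tautology A = (\<forall>v vt vN. evalc v vt vN A)"

inductive thm_SN :: "'a fm \<Rightarrow> bool" where
  taut: "tautology A \<Longrightarrow> thm_SN A"
| axK: "thm_SN (Iff (Nc (Conj A B)) (Disj (Nc A) (Nc B)))"
| axF: "thm_SN (Iff (Neg (Nc A)) (Nc (Neg A)))"
| axC: "thm_SN (Imp A (Nc (Nc A)))"
| axA: "thm_SN (Imp T (Imp (Atom p) (Nc (Neg (Atom p)))))"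
| axT: "thm_SN (Iff T (Nc T))"
| mp: "thm_SN A \<Longrightarrow> thm_SN (Imp A B) \<Longrightarrow> thm_SN B"
| ruleN: "thm_SN A \<Longrightarrow> thm_SN (Nc (Neg A))"

end

theory Submission
  imports Defs
begin

lemma tmp: "thm_SN P \<Longrightarrow> tautology (Imp P Q) \<Longrightarrow> thm_SN Q"
  by (meson thm_SN.mp thm_SN.taut)

lemma tconj: "thm_SN P \<Longrightarrow> thm_SN Q \<Longrightarrow> thm_SN (Conj P Q)"
proof -
  assume p: "thm_SN P" and q: "thm_SN Q"
  have "thm_SN (Imp P (Imp Q (Conj P Q)))" by (rule taut) (simp add: tautology_def)
  with p have "thm_SN (Imp Q (Conj P Q))" by (rule thm_SN.mp)
  with q show ?thesis by (rule thm_SN.mp)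
qed

lemma part1: "thm_SN (Imp A B) \<Longrightarrow> thm_SN (Imp (Nc B) (Nc A))"
proof -
  assume h: "thm_SN (Imp A B)"
  define Y where "Y = Conj A (Neg B)"
  have "thm_SN (Neg Y)" using h by (rule tmp) (simp add: tautology_def Y_def)
  hence 1: "thm_SN (Nc (Neg (Neg Y)))" by (rule ruleN)
  have 2: "thm_SN (Iff (Neg (Nc (Neg Y))) (Nc (Neg (Neg Y))))" by (rule axF)
  have 3: "thm_SN (Iff (Neg (Nc Y)) (Nc (Neg Y)))" by (rule axF)
  have 4: "thm_SN (Iff (Nc (Conj A (Neg B))) (Disj (Nc A) (Nc (Neg B))))" by (rule axK)
  have 5: "thm_SN (Iff (Neg (Nc B)) (Nc (Neg B)))" by (rule axF)
  have "thm_SN (Conj (Nc (Neg (Neg Y))) (Conj (Iff (Neg (Nc (Neg Y))) (Nc (Neg (Neg Y))))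
     (Conj (Iff (Neg (Nc Y)) (Nc (Neg Y))) (Conj (Iff (Nc (Conj A (Neg B))) (Disj (Nc A) (Nc (Neg B))))
       (Iff (Neg (Nc B)) (Nc (Neg B)))))))"
    using 1 2 3 4 5 by (intro tconj)
  thus ?thesis by (rule tmp) (auto simp add: tautology_def Iff_def Y_def)
qed

theorem lemma32:
  fixes A B :: "'a fm"
  shows "(thm_SN (Imp A B) \<longrightarrow> thm_SN (Imp (Nc B) (Nc A)))
       \<and> (thm_SN (Iff A B) \<longrightarrow> thm_SN (Iff (Nc A) (Nc B)))"
proof (intro conjI impI)
  show "thm_SN (Imp A B) \<Longrightarrow> thm_SN (Imp (Nc B) (Nc A))" by (rule part1)
next
  assume h: "thm_SN (Iff A B)"
  have "thm_SN (Imp A B)" using h by (rule tmp) (simp add: tautology_def Iff_def)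
  hence a: "thm_SN (Imp (Nc B) (Nc A))" by (rule part1)
  have "thm_SN (Imp B A)" using h by (rule tmp) (simp add: tautology_def Iff_def)
  hence b: "thm_SN (Imp (Nc A) (Nc B))" by (rule part1)
  show "thm_SN (Iff (Nc A) (Nc B))" unfolding Iff_def using b a by (rule tconj)
qed

end
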